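(* Let $\mathfrak M$ (modelled on $X$) be a Banach manifold with chart family $\mathscr A$ and $\mathfrak M_0$ (modelled on $X_0$) a $C^1$-embedded Banach submanifold of $\mathfrak M$ with respect to $\mathscr A$, such that $(\mathfrak M,\mathfrak M_0,\mathscr A)$ is outward spreadable. Let $\eta\in\mathfrak M_0$, $(\mathcal U,\varphi)$ an $\mathfrak M_0$-regular chart at $\eta$, and $f:(-\varepsilon,\varepsilon)\to\mathfrak M$ with $f(0)=\eta$ such that $\varphi\circ f:(-\varepsilon,\varepsilon)\to X$ is differentiable at $t=0$. Then for every $\mathfrak M_0$-regular chart $(\mathcal V,\psi)$ at $\eta$ such that $\psi\circ f:(-\varepsilon,\varepsilon)\to X$ is differentiable at $t=0$, $$(\psi\circ f)'(0)=(\psi\circ\varphi^{-1})'(\varphi(\eta))\,(\varphi\circ f)'(0).$$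
   Context: Densely embedded spaces and the class $\mathfrak C^k$. For Banach spaces $X$ and $X_0$, $X_0$ is a densely embedded Banach subspace of $X$ if $X_0$ is a dense linear subspace of $X$ and there is $C>0$ with $\|x\|_X\le C\|x\|_{X_0}$ for $x\in X_0$. For such $X_0\subseteq X$, a Banach space $Y$, an open set $U_0\subseteq X_0$ and an integer $k\ge1$, $\mathfrak C^k(U_0;X,Y)$ denotes the set of maps $F:U_0\to Y$ such that (i) for each $x_0\in U_0$ there are bounded symmetric $j$-linear maps $F^{(j)}(x_0):X^j\to Y$, $1\le j\le k$, with $\|F(x)-F(x_0)-\sum_{j=1}^k\frac1{j!}F^{(j)}(x_0)(x-x_0,\dots,x-x_0)\|_Y/\|x-x_0\|_{X_0}^k\to0$ as $\|x-x_0\|_{X_0}\to0$, and (ii) $x\mapsto F^{(j)}(x)$ is continuous from $U_0$ (with the $X_0$-topology) into the space $L^j(X,Y)$ of bounded $j$-linear maps. We write $F'=F^{(1)}$. Embedded submanifolds. Let $\mathfrak M,\mathfrak M_0$ be topological Banach manifolds modelled on $X$, $X_0$, let $\mathscr A$ be a family of local charts of $\mathfrak M$, and $k\ge1$. $\mathfrak M_0$ is a $C^k$-embedded Banach submanifold of $\mathfrak M$ with respect to $\mathscr A$ if: (D1) $X_0$ is a densely embedded Banach subspace of $X$; (D2) $\mathfrak M_0\subseteq\mathfrak M$ and $\mathcal U\cap\mathfrak M_0$ is open in $\mathfrak M_0$ for every open $\mathcal U\subseteq\mathfrak M$; (D3) the domains of the charts of $\mathscr A$ cover $\mathfrak M$;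 (D4) for $\eta\in\mathfrak M_0$ and $(\mathcal U,\varphi)\in\mathscr A$ with $\eta\in\mathcal U$, $(\mathcal U_0,\varphi|_{\mathcal U_0})$ with $\mathcal U_0:=\mathcal U\cap\mathfrak M_0$ is a local chart of $\mathfrak M_0$; (D5) for $\eta\in\mathfrak M_0$ and $(\mathcal U,\varphi),(\mathcal V,\psi)\in\mathscr A$ with $\eta\in\mathcal U\cap\mathcal V$, $\psi\circ\varphi^{-1}\in\mathfrak C^k(\varphi(\mathcal U_0\cap\mathcal V_0);X,X)$ and $\varphi\circ\psi^{-1}\in\mathfrak C^k(\psi(\mathcal U_0\cap\mathcal V_0);X,X)$. A chart of $\mathscr A$ whose domain contains $\eta$ is an $\mathfrak M_0$-regular local chart at $\eta$. $(\mathfrak M,\mathfrak M_0,\mathscr A)$ is outward spreadable if there is a Banach manifold $\widetilde{\mathfrak M}\supseteq\mathfrak M$ with a chart family $\widetilde{\mathscr A}$ whose restrictions to $\mathfrak M$ form $\mathscr A$, such that $\mathfrak M$ is a $C^1$-embedded Banach submanifold of $\widetilde{\mathfrak M}$ with respect to $\widetilde{\mathscr A}$. For charts at $\eta\in\mathfrak M_0$, $(\varphi\circ\psi^{-1})'(\psi(\eta))\in L(X)$ is the first derivative in the $\mathfrak C^1$ sense. *)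

theory Defs
  imports "HOL-Analysis.Analysis"
begin

text \<open>A Banach space X0 densely embedded in X is represented by the (inclusion)
map j :: X0 \<Rightarrow> X: bounded linear (\<open>\<parallel>j x\<parallel> \<le> C \<parallel>x\<parallel>\<close>), injective, with dense range.\<close>
definition densely_embedded :: "('a::banach \<Rightarrow> 'b::banach) \<Rightarrow> bool" where
  "densely_embedded j \<longleftrightarrow> bounded_linear j \<and> inj j \<and> closure (range j) = UNIV"

text \<open>First-order expansion in the frak-C sense at x0 of F defined on U0 \<subseteq> X0,
with derivative L \<in> L(X,Y); the remainder is measured against the X0-norm.\<close>
definition has_frakC_deriv ::
  "('a::banach \<Rightarrow> 'b::banach) \<Rightarrow> 'a set \<Rightarrow> ('a \<Rightarrow> 'y::banach) \<Rightarrow> ('b \<Rightarrow>\<^sub>L 'y) \<Rightarrow> 'a \<Rightarrow> bool" where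
  "has_frakC_deriv j U0 F L x0 \<longleftrightarrow>
     ((\<lambda>x. (F x - F x0 - blinfun_apply L (j (x - x0))) /\<^sub>R norm (x - x0)) \<longlongrightarrow> 0) (at x0 within U0)"

definition frakC1 :: "('a::banach \<Rightarrow> 'b::banach) \<Rightarrow> 'a set \<Rightarrow> ('a \<Rightarrow> 'y::banach) \<Rightarrow> bool" where
  "frakC1 j U0 F \<longleftrightarrow> open U0 \<and>
     (\<exists>Fd :: 'a \<Rightarrow> ('b \<Rightarrow>\<^sub>L 'y). (\<forall>x0\<in>U0. has_frakC_deriv j U0 F (Fd x0) x0) \<and> continuous_on U0 Fd)"

definition frakC1_deriv :: "('a::banach \<Rightarrow> 'b::banach) \<Rightarrow> 'a set \<Rightarrow> ('a \<Rightarrow> 'y::banach) \<Rightarrow> 'a \<Rightarrow> ('b \<Rightarrow>\<^sub>L 'y)" where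
  "frakC1_deriv j U0 F x0 = (THE L. has_frakC_deriv j U0 F L x0)"

definition is_chart :: "'m topology \<Rightarrow> ('m \<Rightarrow> 'x::topological_space) \<Rightarrow> 'm set \<Rightarrow> bool" where
  "is_chart M \<phi> U \<longleftrightarrow> openin M U \<and> open (\<phi> ` U) \<and>
     homeomorphic_map (subtopology M U) (top_of_set (\<phi> ` U)) \<phi>"

definition banach_manifold :: "'m topology \<Rightarrow> 'x::banach itself \<Rightarrow> bool" where
  "banach_manifold M X \<longleftrightarrow> (\<forall>p\<in>topspace M. \<exists>U (\<phi>::'m \<Rightarrow> 'x). p \<in> U \<and> is_chart M \<phi> U)"

text \<open>Domain phi(U0 \<inter> V0) of the transition map psi \<circ> phi^-1, as a subset of X0.\<close>
definition trans_dom :: "('a \<Rightarrow> 'b) \<Rightarrow> 'm topology \<Rightarrow> 'm set \<Rightarrow> ('m \<Rightarrow> 'b) \<Rightarrow> 'm set \<Rightarrow> 'a set" where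
  "trans_dom j M0 U \<phi> V = j -` (\<phi> ` (U \<inter> V \<inter> topspace M0))"

definition transition :: "('a \<Rightarrow> 'b) \<Rightarrow> 'm set \<Rightarrow> ('m \<Rightarrow> 'b) \<Rightarrow> ('m \<Rightarrow> 'c) \<Rightarrow> 'a \<Rightarrow> 'c" where
  "transition j U \<phi> \<psi> = (\<lambda>x. \<psi> (inv_into U \<phi> (j x)))"

text \<open>M0 (modelled on 'a) is a C^1-embedded Banach submanifold of M (modelled on 'b)
  with respect to the chart family A; conditions (D1)-(D5).\<close>
definition C1_embedded ::
  "('a::banach \<Rightarrow> 'b::banach) \<Rightarrow> 'm topology \<Rightarrow> 'm topology \<Rightarrow> ('m set \<times> ('m \<Rightarrow> 'b)) set \<Rightarrow> bool" where
  "C1_embedded j M M0 A \<longleftrightarrow>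
     banach_manifold M TYPE('b) \<and> banach_manifold M0 TYPE('a) \<and>
     (\<forall>(U,\<phi>)\<in>A. is_chart M \<phi> U) \<and>
     densely_embedded j \<and>
     topspace M0 \<subseteq> topspace M \<and> (\<forall>U. openin M U \<longrightarrow> openin M0 (U \<inter> topspace M0)) \<and>
     topspace M \<subseteq> \<Union>(fst ` A) \<and>
     (\<forall>\<eta>\<in>topspace M0. \<forall>(U,\<phi>)\<in>A. \<eta> \<in> U \<longrightarrow>
        (\<exists>\<phi>0::'m \<Rightarrow> 'a. (\<forall>p\<in>U \<inter> topspace M0. j (\<phi>0 p) = \<phi> p) \<and> is_chart M0 \<phi>0 (U \<inter> topspace M0))) \<and>
     (\<forall>\<eta>\<in>topspace M0. \<forall>(U,\<phi>)\<in>A. \<forall>(V,\<psi>)\<in>A. \<eta> \<in> U \<inter> V \<longrightarrow>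
        frakC1 j (trans_dom j M0 U \<phi> V) (transition j U \<phi> \<psi>) \<and>
        frakC1 j (trans_dom j M0 V \<psi> U) (transition j V \<psi> \<phi>))"

text \<open>(Mt, At, j1) witnesses that (M, M0, A) is outward spreadable: M (modelled on 'b,
  embedded in 'c via j1) is a C^1-embedded submanifold of Mt w.r.t. At, and the
  restrictions of the charts of At to M form A.\<close>
definition outward_spread ::
  "('b::banach \<Rightarrow> 'c::banach) \<Rightarrow> 'm topology \<Rightarrow> ('m set \<times> ('m \<Rightarrow> 'b)) set
     \<Rightarrow> 'm topology \<Rightarrow> ('m set \<times> ('m \<Rightarrow> 'c)) set \<Rightarrow> bool" where
  "outward_spread j1 M A Mt At \<longleftrightarrow>
     C1_embedded j1 Mt M At \<and>
     (\<forall>(U,\<phi>)\<in>A. \<exists>(Ut,\<phi>t)\<in>At. U = Ut \<inter> topspace M \<and> (\<forall>p\<in>U. j1 (\<phi> p) = \<phi>t p)) \<and>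
     (\<forall>(Ut,\<phi>t)\<in>At. Ut \<inter> topspace M \<noteq> {} \<longrightarrow>
        (\<exists>(U,\<phi>)\<in>A. U = Ut \<inter> topspace M \<and> (\<forall>p\<in>U. j1 (\<phi> p) = \<phi>t p)))"

end

theory Submission
  imports Defs
begin

lemma frakC_has_derivative:
  assumes "has_frakC_deriv j U0 F L x0" "open U0" "x0 \<in> U0" "bounded_linear j"
  shows "(F has_derivative (\<lambda>h. blinfun_apply L (j h))) (at x0)"
proof -
  have bl: "bounded_linear (\<lambda>h. blinfun_apply L (j h))"
    using assms(4) bounded_linear_compose blinfun.bounded_linear_right by blast
  have "(F has_derivative (\<lambda>h. blinfun_apply L (j h))) (at x0 within U0)"
    using assms(1) bl unfolding has_frakC_deriv_def has_derivative_at_within by simp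
  thus ?thesis using at_within_open[OF assms(3,2)] by simp
qed

lemma dense_eq:
  fixes g h :: "'b::real_normed_vector \<Rightarrow> 'c::real_normed_vector"
  assumes "closure (range j) = UNIV" "continuous_on UNIV g" "continuous_on UNIV h"
    "\<And>x. g (j x) = h (j x)"
  shows "g = h"
proof -
  have "closed {y. g y = h y}"
    using assms(2,3) by (simp add: closed_Collect_eq)
  moreover have "range j \<subseteq> {y. g y = h y}" using assms(4) by auto
  ultimately have "closure (range j) \<subseteq> {y. g y = h y}" by (rule closure_minimal[rotated])
  thus ?thesis using assms(1) by auto
qed

lemma frakC_unique:
  assumes "has_frakC_deriv j U0 F L x0" "has_frakC_deriv j U0 F L' x0"
    "open U0" "x0 \<in> U0" "densely_embedded j"
  shows "L = L'"
proof -
  have bl: "bounded_linear j" using assms(5) by (simp add: densely_embedded_def)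
  have "(\<lambda>h. blinfun_apply L (j h)) = (\<lambda>h. blinfun_apply L' (j h))"
    using has_derivative_unique frakC_has_derivative[OF assms(1,3,4) bl]
      frakC_has_derivative[OF assms(2,3,4) bl] by blast
  hence "blinfun_apply L = blinfun_apply L'"
    apply (intro dense_eq[where j=j])
    using assms(5) by (auto simp: densely_embedded_def fun_eq_iff intro: continuous_intros linear_continuous_on
        blinfun.bounded_linear_right)
  thus ?thesis by (simp add: blinfun_eqI)
qed

lemma frakC1_deriv_works:
  assumes "frakC1 j U0 F" "x0 \<in> U0" "densely_embedded j"
  shows "has_frakC_deriv j U0 F (frakC1_deriv j U0 F x0) x0"
proof -
  from assms(1) obtain Fd where o: "open U0" and "\<forall>x0\<in>U0. has_frakC_deriv j U0 F (Fd x0) x0"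
    unfolding frakC1_def by blast
  hence h: "has_frakC_deriv j U0 F (Fd x0) x0" using assms(2) by blast
  show ?thesis unfolding frakC1_deriv_def
    by (rule theI[of _ "Fd x0"], rule h, rule frakC_unique[OF _ h o assms(2,3)])
qed

lemma chart_inj: "is_chart M \<phi> U \<Longrightarrow> inj_on \<phi> U"
  unfolding is_chart_def homeomorphic_map_def
  by (metis openin_subset topspace_subtopology_subset)

theorem lemma2p8:
  fixes j0 :: "'a::banach \<Rightarrow> 'b::banach" and j1 :: "'b \<Rightarrow> 'c::banach"
    and M M0 Mt :: "'m topology"
    and A :: "('m set \<times> ('m \<Rightarrow> 'b)) set" and At :: "('m set \<times> ('m \<Rightarrow> 'c)) set"
    and \<eta> :: 'm and U V :: "'m set" and \<phi> \<psi> :: "'m \<Rightarrow> 'b"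
    and f :: "real \<Rightarrow> 'm" and \<epsilon> :: real
  assumes emb: "C1_embedded j0 M M0 A"
    and spread: "outward_spread j1 M A Mt At"
    and eta: "\<eta> \<in> topspace M0"
    and chU: "(U, \<phi>) \<in> A" "\<eta> \<in> U"
    and eps: "\<epsilon> > 0"
    and fU: "f ` {-\<epsilon><..<\<epsilon>} \<subseteq> U" and f0: "f 0 = \<eta>"
    and dphi: "(\<phi> \<circ> f) differentiable (at 0 within {-\<epsilon><..<\<epsilon>})"
    and chV: "(V, \<psi>) \<in> A" "\<eta> \<in> V"
    and fV: "f ` {-\<epsilon><..<\<epsilon>} \<subseteq> V"
    and dpsi: "(\<psi> \<circ> f) differentiable (at 0 within {-\<epsilon><..<\<epsilon>})"
  shows "vector_derivative (\<psi> \<circ> f) (at 0 within {-\<epsilon><..<\<epsilon>}) =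
         blinfun_apply
           (frakC1_deriv j0 (trans_dom j0 M0 U \<phi> V) (transition j0 U \<phi> \<psi>) (inv j0 (\<phi> \<eta>)))
           (vector_derivative (\<phi> \<circ> f) (at 0 within {-\<epsilon><..<\<epsilon>}))"
proof -
  let ?I = "{-\<epsilon><..<\<epsilon>}"
  have opI: "open ?I" and I0: "0 \<in> ?I" using eps by auto
  have atI: "at 0 within ?I = at 0" using at_within_open[OF I0 opI] .
  have emb1: "C1_embedded j1 Mt M At" using spread by (simp add: outward_spread_def)
  have de0: "densely_embedded j0" using emb by (simp add: C1_embedded_def)
  have de1: "densely_embedded j1" using emb1 by (simp add: C1_embedded_def)
  have bl0: "bounded_linear j0" and bl1: "bounded_linear j1" and inj1: "inj j1"
    using de0 de1 by (auto simp: densely_embedded_def)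
  have chartsA: "\<And>W \<kappa>. (W,\<kappa>) \<in> A \<Longrightarrow> is_chart M \<kappa> W" using emb by (auto simp: C1_embedded_def)
  have cU: "is_chart M \<phi> U" and cV: "is_chart M \<psi> V" using chartsA chU chV by auto
  have injU: "inj_on \<phi> U" and injV: "inj_on \<psi> V" using chart_inj cU cV by auto
  have Usub: "U \<subseteq> topspace M" and Vsub: "V \<subseteq> topspace M"
    using cU cV by (auto simp: is_chart_def openin_subset)
  have etaM: "\<eta> \<in> topspace M" using eta emb by (auto simp: C1_embedded_def)
  have SP: "\<forall>(U,\<phi>)\<in>A. \<exists>(Ut,\<phi>t)\<in>At. U = Ut \<inter> topspace M \<and> (\<forall>p\<in>U. j1 (\<phi> p) = \<phi>t p)"
    by (rule outward_spread_def[THEN iffD1, OF spread, THEN conjunct2, THEN conjunct1])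
  obtain Ut \<phi>t where Ut: "(Ut,\<phi>t) \<in> At" "U = Ut \<inter> topspace M" "\<And>p. p\<in>U \<Longrightarrow> j1 (\<phi> p) = \<phi>t p"
    using bspec[OF SP chU(1)] by auto
  obtain Vt \<psi>t where Vt: "(Vt,\<psi>t) \<in> At" "V = Vt \<inter> topspace M" "\<And>p. p\<in>V \<Longrightarrow> j1 (\<psi> p) = \<psi>t p"
    using bspec[OF SP chV(1)] by auto
  have injUt: "inj_on \<phi>t Ut" using emb1 Ut(1) chart_inj by (fastforce simp: C1_embedded_def)
  define Dt where "Dt = trans_dom j1 M Ut \<phi>t Vt"
  define Tt where "Tt = transition j1 Ut \<phi>t \<psi>t"
  have H1: "\<forall>\<eta>\<in>topspace M. \<forall>(U,\<phi>)\<in>At. \<forall>(V,\<psi>)\<in>At. \<eta> \<in> U \<inter> V \<longrightarrow>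
        frakC1 j1 (trans_dom j1 M U \<phi> V) (transition j1 U \<phi> \<psi>) \<and>
        frakC1 j1 (trans_dom j1 M V \<psi> U) (transition j1 V \<psi> \<phi>)"
    by (rule C1_embedded_def[THEN iffD1, OF emb1, THEN conjunct2, THEN conjunct2, THEN conjunct2, THEN conjunct2, THEN conjunct2, THEN conjunct2, THEN conjunct2, THEN conjunct2])
  have etaUVt: "\<eta> \<in> Ut \<inter> Vt" using chU(2) chV(2) Ut(2) Vt(2) by auto
  have "\<forall>(V,\<psi>)\<in>At. \<eta> \<in> Ut \<inter> V \<longrightarrow>
        frakC1 j1 (trans_dom j1 M Ut \<phi>t V) (transition j1 Ut \<phi>t \<psi>) \<and>
        frakC1 j1 (trans_dom j1 M V \<psi> Ut) (transition j1 V \<psi> \<phi>t)"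
    using bspec[OF bspec[OF H1 etaM] Ut(1)] by simp
  from bspec[OF this Vt(1)] etaUVt have fCt: "frakC1 j1 Dt Tt"
    unfolding Dt_def Tt_def by simp
  have Tt_eq: "Tt (\<phi> p) = j1 (\<psi> p)" if "p \<in> U \<inter> V" for p
  proof -
    have "p \<in> Ut" using that Ut(2) by auto
    hence "inv_into Ut \<phi>t (\<phi>t p) = p" using injUt by simp
    thus ?thesis using that Ut(3) Vt(3) by (simp add: Tt_def transition_def)
  qed
  have Dt_mem: "\<phi> p \<in> Dt" if "p \<in> U \<inter> V" for p
  proof -
    have "p \<in> Ut \<inter> Vt \<inter> topspace M" using that Ut(2) Vt(2) by auto
    thus ?thesis using that Ut(3) unfolding Dt_def trans_dom_def by force
  qed
  have oDt: "open Dt" using fCt by (simp add: frakC1_def)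
  define Lt where "Lt = frakC1_deriv j1 Dt Tt (\<phi> \<eta>)"
  have dTt: "(Tt has_derivative (\<lambda>h. blinfun_apply Lt (j1 h))) (at (\<phi> \<eta>))"
    using frakC_has_derivative[OF frakC1_deriv_works[OF fCt Dt_mem de1] oDt Dt_mem bl1]
      chU(2) chV(2) unfolding Lt_def by auto
  define D0 where "D0 = trans_dom j0 M0 U \<phi> V"
  define T0 where "T0 = transition j0 U \<phi> \<psi>"
  have H0: "\<forall>\<eta>\<in>topspace M0. \<forall>(U,\<phi>)\<in>A. \<forall>(V,\<psi>)\<in>A. \<eta> \<in> U \<inter> V \<longrightarrow>
        frakC1 j0 (trans_dom j0 M0 U \<phi> V) (transition j0 U \<phi> \<psi>) \<and>
        frakC1 j0 (trans_dom j0 M0 V \<psi> U) (transition j0 V \<psi> \<phi>)"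
    by (rule C1_embedded_def[THEN iffD1, OF emb, THEN conjunct2, THEN conjunct2, THEN conjunct2, THEN conjunct2, THEN conjunct2, THEN conjunct2, THEN conjunct2, THEN conjunct2])
  have "\<forall>(V',\<psi>')\<in>A. \<eta> \<in> U \<inter> V' \<longrightarrow>
        frakC1 j0 (trans_dom j0 M0 U \<phi> V') (transition j0 U \<phi> \<psi>') \<and>
        frakC1 j0 (trans_dom j0 M0 V' \<psi>' U) (transition j0 V' \<psi>' \<phi>)"
    using bspec[OF bspec[OF H0 eta] chU(1)] by simp
  from bspec[OF this chV(1)] chU(2) chV(2) have fC0: "frakC1 j0 D0 T0"
    unfolding D0_def T0_def by simp
  have oD0: "open D0" using fC0 by (simp add: frakC1_def)
  obtain \<phi>0 :: "'m \<Rightarrow> 'a" where ph0: "\<And>p. p\<in>U \<inter> topspace M0 \<Longrightarrow> j0 (\<phi>0 p) = \<phi> p"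
  proof -
    have H4: "\<forall>\<eta>\<in>topspace M0. \<forall>(U,\<phi>)\<in>A. \<eta> \<in> U \<longrightarrow>
        (\<exists>\<phi>0::'m \<Rightarrow> 'a. (\<forall>p\<in>U \<inter> topspace M0. j0 (\<phi>0 p) = \<phi> p) \<and> is_chart M0 \<phi>0 (U \<inter> topspace M0))"
      by (rule C1_embedded_def[THEN iffD1, OF emb, THEN conjunct2, THEN conjunct2, THEN conjunct2, THEN conjunct2, THEN conjunct2, THEN conjunct2, THEN conjunct2, THEN conjunct1])
    from bspec[OF bspec[OF H4 eta] chU(1)] chU(2) show ?thesis using that by auto
  qed
  have inj0: "inj j0" using de0 by (simp add: densely_embedded_def)
  define x0 where "x0 = inv j0 (\<phi> \<eta>)"
  have jx0: "j0 x0 = \<phi> \<eta>" using ph0[of \<eta>] eta chU(2) inj0 unfolding x0_def by (metis IntI inv_f_f)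
  have x0D: "x0 \<in> D0" using jx0 eta chU(2) chV(2) unfolding D0_def trans_dom_def by force
  have D0prop: "\<exists>p\<in>U \<inter> V. j0 x = \<phi> p \<and> T0 x = \<psi> p" if xD: "x \<in> D0" for x
  proof -
    obtain p where p: "p \<in> U \<inter> V \<inter> topspace M0" "j0 x = \<phi> p"
    proof -
      have "j0 x \<in> \<phi> ` (U \<inter> V \<inter> topspace M0)" using xD unfolding D0_def trans_dom_def by simp
      thus ?thesis using that by (metis (no_types, lifting) imageE)
    qed
    hence "inv_into U \<phi> (\<phi> p) = p" using injU by simp
    thus ?thesis using p by (auto simp: T0_def transition_def)
  qed
  define L0 where "L0 = frakC1_deriv j0 D0 T0 x0"
  have dT0: "(T0 has_derivative (\<lambda>h. blinfun_apply L0 (j0 h))) (at x0)"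
    using frakC_has_derivative[OF frakC1_deriv_works[OF fC0 x0D de0] oD0 x0D bl0]
    unfolding L0_def by auto
  have d1: "((\<lambda>x. j1 (T0 x)) has_derivative (\<lambda>h. j1 (blinfun_apply L0 (j0 h)))) (at x0)"
    using bounded_linear.has_derivative[OF bl1 dT0] .
  have d2: "((\<lambda>x. Tt (j0 x)) has_derivative (\<lambda>h. blinfun_apply Lt (j1 (j0 h)))) (at x0)"
    using diff_chain_at[OF bounded_linear_imp_has_derivative[OF bl0], of Tt _ x0] dTt jx0
    by (simp add: o_def)
  have d2': "((\<lambda>x. j1 (T0 x)) has_derivative (\<lambda>h. blinfun_apply Lt (j1 (j0 h)))) (at x0)"
  proof (rule has_derivative_transform_within_open[OF d2 oD0 x0D])
    fix x assume "x \<in> D0"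
    then obtain p where "p\<in>U \<inter> V" "j0 x = \<phi> p" "T0 x = \<psi> p" using D0prop by blast
    thus "Tt (j0 x) = j1 (T0 x)" using Tt_eq by simp
  qed
  have eqj: "(\<lambda>h. j1 (blinfun_apply L0 (j0 h))) = (\<lambda>h. blinfun_apply Lt (j1 (j0 h)))"
    using has_derivative_unique[OF d1 d2'] .
  have eqL: "(\<lambda>y. j1 (blinfun_apply L0 y)) = (\<lambda>y. blinfun_apply Lt (j1 y))"
    apply (rule dense_eq[where j=j0])
    using de0 eqj bl1 by (auto simp: densely_embedded_def fun_eq_iff
        intro!: linear_continuous_on bounded_linear_compose[OF bl1] bounded_linear_compose[OF _ bl1]
         blinfun.bounded_linear_right)
  define d\<phi> where "d\<phi> = vector_derivative (\<phi> \<circ> f) (at 0 within ?I)"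
  define d\<psi> where "d\<psi> = vector_derivative (\<psi> \<circ> f) (at 0 within ?I)"
  have v\<phi>: "((\<phi> \<circ> f) has_vector_derivative d\<phi>) (at 0)"
    using dphi[unfolded vector_derivative_works] atI unfolding d\<phi>_def by simp
  have v\<psi>: "((\<psi> \<circ> f) has_vector_derivative d\<psi>) (at 0)"
    using dpsi[unfolded vector_derivative_works] atI unfolding d\<psi>_def by simp
  have w1: "((\<lambda>t. j1 ((\<psi> \<circ> f) t)) has_vector_derivative j1 d\<psi>) (at 0)"
    using bounded_linear.has_vector_derivative[OF bl1 v\<psi>] .
  have cd: "((\<lambda>t. Tt ((\<phi> \<circ> f) t)) has_derivative (\<lambda>t. blinfun_apply Lt (j1 (t *\<^sub>R d\<phi>)))) (at 0)"
    using diff_chain_at[OF v\<phi>[unfolded has_vector_derivative_def], of Tt] dTt f0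
    by (simp add: o_def)
  have w2: "((\<lambda>t. Tt ((\<phi> \<circ> f) t)) has_vector_derivative blinfun_apply Lt (j1 d\<phi>)) (at 0)"
    using cd unfolding has_vector_derivative_def
    by (simp add: linear_simps linear_scale[OF bounded_linear.linear[OF bl1]] blinfun.scaleR_right)
  have w2': "((\<lambda>t. j1 ((\<psi> \<circ> f) t)) has_vector_derivative blinfun_apply Lt (j1 d\<phi>)) (at 0)"
  proof (rule has_vector_derivative_transform_within_open[OF w2 opI I0])
    fix t assume "t \<in> ?I"
    hence "f t \<in> U \<inter> V" using fU fV by auto
    thus "Tt ((\<phi> \<circ> f) t) = j1 ((\<psi> \<circ> f) t)" using Tt_eq by simp
  qed
  have "j1 d\<psi> = blinfun_apply Lt (j1 d\<phi>)" using vector_derivative_unique_at[OF w1 w2'] .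
  also have "\<dots> = j1 (blinfun_apply L0 d\<phi>)" using eqL by (metis)
  finally have "d\<psi> = blinfun_apply L0 d\<phi>" using inj1 by (simp add: inj_eq)
  thus ?thesis unfolding d\<psi>_def d\<phi>_def L0_def D0_def T0_def x0_def .
qed

end
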